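(* Let $a\in(0,2)$, $\gamma\in(0,a)$ and $p\in\big(\frac{2}{2-\gamma},\frac{2}{2-a}\big)$. There exists a constant $C_{\gamma,p,a}>0$ such that for every $N\ge2$ and every random vector $(X_1,\dots,X_N)\in(\mathbb R^2)^N$ with law $F^N\in\mathcal P_{\rm sym}(\mathbb R^{2N})$, $$\sup_{1\le i\ne j\le N}\mathbb E\big[|X_i-X_j|^{-\gamma}\big]\le C_{\gamma,p,a}\Big(1+\mathcal I^N_a(F^N)^{1-\frac2a\left(\frac1p-\frac{2-a}{2}\right)}\Big).$$
   Context: $\mathcal P_{\rm sym}(\mathbb R^{2N})$: probability measures on $(\mathbb R^2)^N$ invariant under permutations of the $N$ components. With $\Phi(x,y)=(x-y)(\ln x-\ln y)$ and $X^x_k=(x_1,\dots,x_{k-1},x,x_{k+1},\dots,x_N)$, $\mathcal I^N_a(G)=\frac{1}{2N}\sum_{k=1}^N\int_{\mathbb R^{2(N-1)}}\int_{\mathbb R^2\times\mathbb R^2}\frac{\Phi(G(X_k^x),G(X_k^y))}{|x-y|^{2+a}}dxdy\prod_{j\ne k}dx_j$. *)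

theory Defs
  imports "HOL-Probability.Probability"
begin

text \<open>Points of R^2 are vectors of type real^2; configurations of N points are
  extensional functions on the index set {..<N}.  Lebesgue measure on (R^2)^N
  is the product measure below.\<close>

definition leb_conf :: "nat \<Rightarrow> (nat \<Rightarrow> real^2) measure" where
  "leb_conf N = PiM {..<N} (\<lambda>_. lborel)"

definition sym_prob :: "nat \<Rightarrow> (nat \<Rightarrow> real^2) measure \<Rightarrow> bool" where
  "sym_prob N F \<longleftrightarrow> prob_space F \<and> sets F = sets (leb_conf N) \<and>
     (\<forall>\<sigma>. \<sigma> permutes {..<N} \<longrightarrow> distr F F (\<lambda>x. x \<circ> \<sigma>) = F)"

definition Phi :: "real \<Rightarrow> real \<Rightarrow> ennreal" where
  "Phi x y = (if x = y then 0 else if x \<le> 0 \<or> y \<le> 0 then \<top>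
              else ennreal ((x - y) * (ln x - ln y)))"

definition fisher_a :: "real \<Rightarrow> nat \<Rightarrow> ((nat \<Rightarrow> real^2) \<Rightarrow> real) \<Rightarrow> ennreal" where
  "fisher_a a N G = ennreal (1 / (2 * real N)) *
     (\<Sum>k<N. \<integral>\<^sup>+ z. (\<integral>\<^sup>+ x. \<integral>\<^sup>+ y.
         Phi (G (z(k := x))) (G (z(k := y))) * ennreal (norm (x - y) powr (-(2 + a)))
       \<partial>lborel \<partial>lborel) \<partial>(PiM ({..<N} - {k}) (\<lambda>_. lborel)))"

text \<open>Fractional Fisher information of a measure: the value at (any) density
  w.r.t. Lebesgue measure; +inf if F has no density.\<close>

definition fisher_meas :: "real \<Rightarrow> nat \<Rightarrow> (nat \<Rightarrow> real^2) measure \<Rightarrow> ennreal" where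
  "fisher_meas a N F = (INF G \<in> {G. G \<in> borel_measurable (leb_conf N) \<and> (\<forall>x. 0 \<le> G x) \<and>
        F = density (leb_conf N) (\<lambda>x. ennreal (G x))}. fisher_a a N G)"

definition inv_dist_pow :: "real \<Rightarrow> real^2 \<Rightarrow> real^2 \<Rightarrow> ennreal" where
  "inv_dist_pow g u v = (if u = v then \<top> else ennreal (norm (u - v) powr (-g)))"

definition enn_powr :: "ennreal \<Rightarrow> real \<Rightarrow> ennreal" where
  "enn_powr x e = (if x = \<top> then \<top> else ennreal (enn2real x powr e))"

end

theory Submission
  imports Defs
begin

lemma ball_vol: "0 \<le> r \<Longrightarrow> emeasure lborel (ball (c::real^2) r) = ennreal (pi * r^2)"
proof -
  have g: "Gamma (2::real) = 1" using Gamma_fact[of 1] by (simp add: numeral_2_eq_2)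
  assume "0 \<le> r" then show ?thesis using emeasure_ball[of r c] by (simp add: unit_ball_vol_def g)
qed

lemma young_sq:
  fixes u w e :: real assumes "0 < e"
  shows "(u + w)^2 \<le> (1+e) * u^2 + (1 + 1/e) * w^2"
proof -
  have "(1+e) * u^2 + (1 + 1/e) * w^2 - (u + w)^2 = (e*u - w)^2 / e"
    using assms by (simp add: field_simps power2_eq_square)
  moreover have "(e*u - w)^2 / e \<ge> 0" using assms by simp
  ultimately show ?thesis by linarith
qed

lemma phi_real:
  fixes u v :: real assumes "0 < v" "v < u"
  shows "(sqrt u - sqrt v)^2 \<le> (u - v) * (ln u - ln v)"
proof -
  have l: "ln (v/u) \<le> v/u - 1" using assms by (intro ln_le_minus_one) auto
  have "ln (v/u) = ln v - ln u" using assms by (simp add: ln_div)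
  with l have l2: "ln u - ln v \<ge> 1 - v/u" by linarith
  have "(u - v) * (1 - v/u) \<le> (u - v) * (ln u - ln v)"
    using l2 assms by (intro mult_left_mono) auto
  moreover have "(u - v) * (1 - v/u) = (u-v)^2 / u" using assms by (simp add: field_simps power2_eq_square)
  moreover have "(sqrt u - sqrt v)^2 \<le> (u-v)^2 / u"
  proof -
    have su: "sqrt u ^2 = u" "sqrt v ^2 = v" using assms by auto
    have "(u - v)^2 = (sqrt u - sqrt v)^2 * (sqrt u + sqrt v)^2"
      by (metis power_mult_distrib su square_diff_square_factored mult.commute power2_eq_square)
    moreover have "(sqrt u + sqrt v)^2 \<ge> u" using assms su
      by (smt (verit) power_mono real_sqrt_ge_zero)
    ultimately have "(u-v)^2 \<ge> (sqrt u - sqrt v)^2 * u"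
      by (simp add: mult_left_mono)
    then show ?thesis using assms by (simp add: field_simps)
  qed
  ultimately show ?thesis by linarith
qed

lemma Phi_ge:
  assumes "0 \<le> u" "0 \<le> v"
  shows "ennreal ((sqrt u - sqrt v)^2) \<le> Phi u v"
proof (cases "u = v")
  case True then show ?thesis by (simp add: Phi_def)
next
  case ne: False
  show ?thesis
  proof (cases "u \<le> 0 \<or> v \<le> 0")
    case True then show ?thesis using ne by (simp add: Phi_def)
  next
    case False
    then have "(sqrt u - sqrt v)^2 \<le> (u - v) * (ln u - ln v)"
    proof (cases "v < u")
      case True then show ?thesis using False phi_real by auto
    next
      case f2: False
      then have "u < v" using ne by auto
      then have "(sqrt v - sqrt u)^2 \<le> (v - u) * (ln v - ln u)" using False phi_real by auto
      then show ?thesis by (simp add: power2_commute algebra_simps)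
    qed
    then show ?thesis using ne False by (simp add: Phi_def ennreal_leI)
  qed
qed
lemma step_pt:
  fixes g :: "real^2 \<Rightarrow> real"
  assumes g[measurable]: "g \<in> borel_measurable lborel" and gnn: "\<And>x. 0 \<le> g x" and e: "0 < e" and B[measurable]: "B \<in> sets lborel"
  shows "ennreal (g x) * emeasure lborel B \<le>
     ennreal (1+e) * (\<integral>\<^sup>+y. ennreal (g y) * indicator B y \<partial>lborel)
   + ennreal (1+1/e) * (\<integral>\<^sup>+y. ennreal ((sqrt (g x) - sqrt (g y))^2) * indicator B y \<partial>lborel)"
proof -
  have "ennreal (g x) * emeasure lborel B = (\<integral>\<^sup>+y. ennreal (g x) * indicator B y \<partial>lborel)"
    by (rule nn_integral_cmult_indicator[symmetric, OF B])
  also have "\<dots> \<le> (\<integral>\<^sup>+y. ennreal (1+e) * (ennreal (g y) * indicator B y)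
       + ennreal (1+1/e) * (ennreal ((sqrt (g x) - sqrt (g y))^2) * indicator B y) \<partial>lborel)"
  proof (intro nn_integral_mono)
    fix y
    have "g x \<le> (1+e) * g y + (1+1/e) * (sqrt (g x) - sqrt (g y))^2"
      using young_sq[OF e, of "sqrt (g y)" "sqrt (g x) - sqrt (g y)"] gnn[of x] gnn[of y] by simp
    then have "ennreal (g x) \<le> ennreal (1+e) * ennreal (g y) + ennreal (1+1/e) * ennreal ((sqrt (g x) - sqrt (g y))^2)"
      using e gnn[of y] by (simp add: ennreal_mult[symmetric] ennreal_plus[symmetric] ennreal_leI del: ennreal_plus)
    then show "ennreal (g x) * indicator B y \<le> ennreal (1+e) * (ennreal (g y) * indicator B y)
       + ennreal (1+1/e) * (ennreal ((sqrt (g x) - sqrt (g y))^2) * indicator B y)"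
      by (auto split: split_indicator)
  qed
  also have "\<dots> = ennreal (1+e) * (\<integral>\<^sup>+y. ennreal (g y) * indicator B y \<partial>lborel)
   + ennreal (1+1/e) * (\<integral>\<^sup>+y. ennreal ((sqrt (g x) - sqrt (g y))^2) * indicator B y \<partial>lborel)"
    by (simp add: nn_integral_add nn_integral_cmult)
  finally show ?thesis .
qed
lemma dist_fact:
  fixes x y x0 :: "real^2" assumes "x \<noteq> y" "dist x0 x < r" "dist x0 y < s" "0 < a"
  shows "1 \<le> (r + s) powr (2+a) * norm (x - y) powr -(2+a)"
proof -
  have n: "0 < norm (x - y)" using assms by auto
  have "norm (x - y) \<le> dist x0 x + dist x0 y" by (metis dist_commute dist_norm dist_triangle)
  then have "norm (x - y) < r + s" using assms by linarith
  then have "norm (x - y) powr (2+a) \<le> (r + s) powr (2+a)"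
    using n assms by (intro powr_mono2) auto
  then have "norm (x - y) powr (2+a) * norm (x - y) powr -(2+a) \<le> (r + s) powr (2+a) * norm (x - y) powr -(2+a)"
    by (rule mult_right_mono) simp
  moreover have "norm (x - y) powr (2+a) * norm (x - y) powr -(2+a) = 1"
    using n by (simp add: powr_add[symmetric])
  ultimately show ?thesis by simp
qed

lemma measurable_Phi[measurable]:
  assumes [measurable]: "f \<in> borel_measurable M" "g \<in> borel_measurable M"
  shows "(\<lambda>x. Phi (f x) (g x)) \<in> borel_measurable M"
  unfolding Phi_def by measurable

lemma step_int:
  fixes g :: "real^2 \<Rightarrow> real"
  assumes g[measurable]: "g \<in> borel_measurable lborel" and gnn: "\<And>x. 0 \<le> g x" and e: "0 < e"
    and r: "0 < r" and a: "0 < a"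
  shows "(\<integral>\<^sup>+x. ennreal (g x) * indicator (ball x0 r) x \<partial>lborel) * ennreal (4*pi*r^2) \<le>
     ennreal ((1+e)*pi*r^2) * (\<integral>\<^sup>+x. ennreal (g x) * indicator (ball x0 (2*r)) x \<partial>lborel)
   + ennreal ((1+1/e) * (3*r) powr (2+a)) *
      (\<integral>\<^sup>+x. \<integral>\<^sup>+y. Phi (g x) (g y) * ennreal (norm (x - y) powr -(2+a)) \<partial>lborel \<partial>lborel)"
proof -
  define A2 where "A2 = (\<integral>\<^sup>+x. ennreal (g x) * indicator (ball x0 (2*r)) x \<partial>lborel)"
  define D where "D x = (\<integral>\<^sup>+y. ennreal ((sqrt (g x) - sqrt (g y))^2) * indicator (ball x0 (2*r)) y \<partial>lborel)" for x
  have V2: "emeasure lborel (ball x0 (2*r)) = ennreal (4*pi*r^2)" using r by (simp add: ball_vol power2_eq_square)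
  have V1: "emeasure lborel (ball x0 r) = ennreal (pi*r^2)" using r by (simp add: ball_vol)
  have [measurable]: "ball x0 (2*r) \<in> sets borel" "ball x0 r \<in> sets borel" by simp_all
  have Dm[measurable]: "D \<in> borel_measurable lborel" unfolding D_def by measurable
  have "(\<integral>\<^sup>+x. ennreal (g x) * indicator (ball x0 r) x \<partial>lborel) * ennreal (4*pi*r^2)
      = (\<integral>\<^sup>+x. (ennreal (g x) * emeasure lborel (ball x0 (2*r))) * indicator (ball x0 r) x \<partial>lborel)"
    unfolding V2 by (subst nn_integral_multc[symmetric]) (auto simp: mult_ac intro!: nn_integral_cong)
  also have "\<dots> \<le> (\<integral>\<^sup>+x. (ennreal (1+e) * A2 + ennreal (1+1/e) * D x) * indicator (ball x0 r) x \<partial>lborel)"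
    unfolding A2_def D_def
    by (intro nn_integral_mono mult_right_mono step_pt[OF g gnn e]) auto
  also have "\<dots> = ennreal (1+e) * A2 * emeasure lborel (ball x0 r)
      + ennreal (1+1/e) * (\<integral>\<^sup>+x. D x * indicator (ball x0 r) x \<partial>lborel)"
    by (simp add: distrib_right nn_integral_add nn_integral_cmult nn_integral_cmult_indicator mult.assoc)
  finally have L1: "(\<integral>\<^sup>+x. ennreal (g x) * indicator (ball x0 r) x \<partial>lborel) * ennreal (4*pi*r^2) \<le> ennreal (1+e) * A2 * emeasure lborel (ball x0 r)
      + ennreal (1+1/e) * (\<integral>\<^sup>+x. D x * indicator (ball x0 r) x \<partial>lborel)" .
  have L2: "(\<integral>\<^sup>+x. D x * indicator (ball x0 r) x \<partial>lborel) \<le>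
     (\<integral>\<^sup>+x. ennreal ((3*r) powr (2+a)) * (\<integral>\<^sup>+y. Phi (g x) (g y) * ennreal (norm (x - y) powr -(2+a)) \<partial>lborel) \<partial>lborel)"
  proof (intro nn_integral_mono)
    fix x
    show "D x * indicator (ball x0 r) x \<le> ennreal ((3*r) powr (2+a)) * (\<integral>\<^sup>+y. Phi (g x) (g y) * ennreal (norm (x - y) powr -(2+a)) \<partial>lborel)"
    proof (cases "x \<in> ball x0 r")
      case False then show ?thesis by simp
    next
      case xin: True
      have "D x \<le> (\<integral>\<^sup>+y. ennreal ((3*r) powr (2+a)) * (Phi (g x) (g y) * ennreal (norm (x - y) powr -(2+a))) \<partial>lborel)"
        unfolding D_def
      proof (intro nn_integral_mono)
        fix y
        show "ennreal ((sqrt (g x) - sqrt (g y))^2) * indicator (ball x0 (2*r)) y \<le> ennreal ((3*r) powr (2+a)) * (Phi (g x) (g y) * ennreal (norm (x - y) powr -(2+a)))"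
        proof (cases "y \<in> ball x0 (2*r) \<and> x \<noteq> y")
          case False then show ?thesis by (auto split: split_indicator)
        next
          case True
          have "1 \<le> (r + 2*r) powr (2+a) * norm (x - y) powr -(2+a)"
            using True xin a by (intro dist_fact) auto
          then have h1: "1 \<le> (3*r) powr (2+a) * norm (x - y) powr -(2+a)" by simp
          have "ennreal ((sqrt (g x) - sqrt (g y))^2) = 1 * ennreal ((sqrt (g x) - sqrt (g y))^2)" by simp
          also have "\<dots> \<le> ennreal ((3*r) powr (2+a) * norm (x - y) powr -(2+a)) * Phi (g x) (g y)"
            using h1 by (intro mult_mono Phi_ge gnn) (auto intro: ennreal_leI simp del: ennreal_1 simp add: ennreal_1[symmetric])
          finally show ?thesis using True
            by (simp add: ennreal_mult mult_ac)
        qed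
      qed
      then show ?thesis using xin by (simp add: nn_integral_cmult)
    qed
  qed
  also have "\<dots> = ennreal ((3*r) powr (2+a)) * (\<integral>\<^sup>+x. \<integral>\<^sup>+y. Phi (g x) (g y) * ennreal (norm (x - y) powr -(2+a)) \<partial>lborel \<partial>lborel)"
    by (rule nn_integral_cmult) measurable
  finally have L2: "(\<integral>\<^sup>+x. D x * indicator (ball x0 r) x \<partial>lborel) \<le> ennreal ((3*r) powr (2+a)) * (\<integral>\<^sup>+x. \<integral>\<^sup>+y. Phi (g x) (g y) * ennreal (norm (x - y) powr -(2+a)) \<partial>lborel \<partial>lborel)" .
  have "ennreal (1+e) * A2 * emeasure lborel (ball x0 r) = ennreal ((1+e)*pi*r^2) * A2"
  proof -
    have "ennreal ((1+e)*pi*r^2) = ennreal (1+e) * ennreal (pi*r^2)"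
    proof -
      have "ennreal ((1+e)*(pi*r^2)) = ennreal (1+e) * ennreal (pi*r^2)"
        using e by (intro ennreal_mult) auto
      then show ?thesis by (simp only: mult.assoc)
    qed
    then show ?thesis by (simp add: V1 mult_ac)
  qed
  moreover have "ennreal (1+1/e) * (ennreal ((3*r) powr (2+a)) * (\<integral>\<^sup>+x. \<integral>\<^sup>+y. Phi (g x) (g y) * ennreal (norm (x - y) powr -(2+a)) \<partial>lborel \<partial>lborel))
     = ennreal ((1+1/e) * (3*r) powr (2+a)) * (\<integral>\<^sup>+x. \<integral>\<^sup>+y. Phi (g x) (g y) * ennreal (norm (x - y) powr -(2+a)) \<partial>lborel \<partial>lborel)"
    using e by (simp add: ennreal_mult mult_ac)
  ultimately show ?thesis
  proof -
    assume E1: "ennreal (1+e) * A2 * emeasure lborel (ball x0 r) = ennreal ((1+e)*pi*r^2) * A2"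
    assume E2: "ennreal (1+1/e) * (ennreal ((3*r) powr (2+a)) * (\<integral>\<^sup>+x. \<integral>\<^sup>+y. Phi (g x) (g y) * ennreal (norm (x - y) powr -(2+a)) \<partial>lborel \<partial>lborel))
     = ennreal ((1+1/e) * (3*r) powr (2+a)) * (\<integral>\<^sup>+x. \<integral>\<^sup>+y. Phi (g x) (g y) * ennreal (norm (x - y) powr -(2+a)) \<partial>lborel \<partial>lborel)"
    have "ennreal (1+1/e) * (\<integral>\<^sup>+x. D x * indicator (ball x0 r) x \<partial>lborel) \<le> ennreal (1+1/e) * (ennreal ((3*r) powr (2+a)) * (\<integral>\<^sup>+x. \<integral>\<^sup>+y. Phi (g x) (g y) * ennreal (norm (x - y) powr -(2+a)) \<partial>lborel \<partial>lborel))"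
      by (rule mult_left_mono[OF L2]) simp
    then show ?thesis unfolding A2_def[symmetric] E2[symmetric]
      by (rule order_trans[OF L1[unfolded E1] add_left_mono])
  qed
qed
lemma geo_bound:
  fixes x :: real assumes "0 \<le> x" "x < 1"
  shows "(\<Sum>k<n. x^k) \<le> 1 / (1 - x)"
proof -
  have "(\<Sum>k<n. x^k) = (1 - x^n) / (1 - x)" using assms sum_gp_strict[of x n] by simp
  also have "\<dots> \<le> 1 / (1 - x)" using assms by (intro divide_right_mono) auto
  finally show ?thesis .
qed

lemma morrey:
  fixes g :: "real^2 \<Rightarrow> real"
  assumes g[measurable]: "g \<in> borel_measurable lborel" and gnn: "\<And>x. 0 \<le> g x" and e: "0 < e"
    and a: "0 < a" and th: "(1+e)/4 * 2 powr a < 1"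
    and M: "(\<integral>\<^sup>+x. ennreal (g x) \<partial>lborel) < \<infinity>" and r: "0 < r"
  shows "(\<integral>\<^sup>+x. ennreal (g x) * indicator (ball x0 r) x \<partial>lborel) \<le>
     ennreal ((1+1/e) * 3 powr (2+a) / (4*pi) / (1 - (1+e)/4 * 2 powr a) * r powr a) *
      (\<integral>\<^sup>+x. \<integral>\<^sup>+y. Phi (g x) (g y) * ennreal (norm (x - y) powr -(2+a)) \<partial>lborel \<partial>lborel)"
    (is "?A r \<le> ennreal (?K * r powr a) * ?E")
proof -
  define \<theta> where "\<theta> = (1+e)/4"
  define q where "q = (2::real) powr a"
  define c where "c = (1+1/e) * 3 powr (2+a) / (4*pi)"
  have K: "?K = c / (1 - \<theta> * q)" unfolding c_def \<theta>_def q_def by simp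
  have q1: "1 \<le> q" unfolding q_def using a by (intro ge_one_powr_ge_zero) auto
  have thq: "\<theta> * q < 1" "0 \<le> \<theta> * q" "0 < \<theta>" "0 < q" using th e a q1 unfolding \<theta>_def q_def
    by auto
  have "\<theta> \<le> \<theta> * q" using q1 thq by simp
  then have th1: "\<theta> < 1" using thq by linarith
  have "0 < 1 + 1/e" using e by (simp add: add_pos_pos)
  then have cpos: "0 < c" unfolding c_def by (intro divide_pos_pos mult_pos_pos) auto
  show ?thesis
  proof (cases "?E = \<top>")
    case True
    have "0 < ?K * r powr a" unfolding K using cpos thq r by auto
    then have "ennreal (?K * r powr a) \<noteq> 0" by (simp only: ennreal_eq_0_iff not_le)
    then have "ennreal (?K * r powr a) * ?E = \<top>" unfolding True by (rule ennreal_top_mult_left)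
    then show ?thesis by (metis top_greatest)
  next
    case False
    then obtain E where E: "?E = ennreal E" "0 \<le> E" by (cases "?E") auto
    obtain m where m: "(\<integral>\<^sup>+x. ennreal (g x) \<partial>lborel) = ennreal m" "0 \<le> m"
      using M by (cases "(\<integral>\<^sup>+x. ennreal (g x) \<partial>lborel)") auto
    define \<alpha> where "\<alpha> s = enn2real (?A s)" for s
    have [measurable]: "\<And>s. ball x0 s \<in> sets borel" by simp
    have Ale: "?A s \<le> ennreal m" for s
      unfolding m(1)[symmetric] by (intro nn_integral_mono) (auto split: split_indicator)
    then have Afin: "?A s = ennreal (\<alpha> s)" for s
      unfolding \<alpha>_def using Ale[of s] by (cases "?A s") (auto simp: top_unique)
    have anonneg: "0 \<le> \<alpha> s" for s unfolding \<alpha>_def by simp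
    have ale: "\<alpha> s \<le> m" for s using Ale[of s] Afin[of s] m by (simp add: ennreal_le_iff)
    have step: "\<alpha> s \<le> \<theta> * \<alpha> (2 * s) + c * s powr a * E" if s: "0 < s" for s
    proof -
      have "ennreal (\<alpha> s) * ennreal (4*pi* s^2) \<le> ennreal ((1+e)*pi* s^2) * ennreal (\<alpha> (2 * s)) + ennreal ((1+1/e) * (3* s) powr (2+a)) * ennreal E"
        using step_int[OF g gnn e s a, of x0] unfolding Afin E by simp
      then have "\<alpha> s * (4*pi* s^2) \<le> (1+e)*pi* s^2 * \<alpha> (2 * s) + (1+1/e) * (3* s) powr (2+a) * E"
        using e anonneg E(2) s
        by (simp add: ennreal_mult[symmetric] ennreal_plus[symmetric] ennreal_le_iff del: ennreal_plus)
      moreover have "(3* s) powr (2+a) = 3 powr (2+a) * s^2 * s powr a"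
        using s by (simp add: powr_mult powr_add powr_numeral)
      ultimately have "\<alpha> s * (4*pi* s^2) \<le> (1+e)*pi* s^2 * \<alpha> (2 * s) + ((1+1/e) * 3 powr (2+a) * E * s powr a) * s^2"
        by (simp add: mult_ac)
      moreover have "(4*pi) * ((\<theta> * \<alpha> (2 * s) + c * s powr a * E) * s^2) = (1+e)*pi* s^2 * \<alpha> (2 * s) + ((1+1/e) * 3 powr (2+a) * E * s powr a) * s^2"
        unfolding \<theta>_def c_def by (simp add: field_simps)
      ultimately have "(4*pi) * (\<alpha> s * s^2) \<le> (4*pi) * ((\<theta> * \<alpha> (2 * s) + c * s powr a * E) * s^2)"
        by (simp add: mult_ac)
      then have "\<alpha> s * s^2 \<le> (\<theta> * \<alpha> (2 * s) + c * s powr a * E) * s^2"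
        by (simp add: mult_le_cancel_left)
      then show ?thesis using s by (simp add: mult_le_cancel_right)
    qed
    have iter: "\<forall>s>0. \<alpha> s \<le> \<theta>^n * \<alpha> (2^n* s) + c * E * s powr a * (\<Sum>k<n. (\<theta>*q)^k)" for n
    proof (induction n)
      case 0 then show ?case by simp
    next
      case (Suc n)
      show ?case
      proof (intro allI impI)
        fix s :: real assume s: "0 < s"
        have "\<alpha> s \<le> \<theta> * \<alpha> (2 * s) + c * s powr a * E" by (rule step[OF s])
        also have "\<alpha> (2 * s) \<le> \<theta>^n * \<alpha> (2^n*(2 * s)) + c * E * (2 * s) powr a * (\<Sum>k<n. (\<theta>*q)^k)"
          using Suc s by simp
        then have "\<theta> * \<alpha> (2 * s) \<le> \<theta> * (\<theta>^n * \<alpha> (2^n*(2 * s)) + c * E * (2 * s) powr a * (\<Sum>k<n. (\<theta>*q)^k))"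
          using thq by (intro mult_left_mono) auto
        then have "\<theta> * \<alpha> (2 * s) + c * s powr a * E \<le> \<theta> * (\<theta>^n * \<alpha> (2^n*(2 * s)) + c * E * (2 * s) powr a * (\<Sum>k<n. (\<theta>*q)^k)) + c * s powr a * E"
          by simp
        also have "\<dots> = \<theta>^Suc n * \<alpha> (2^Suc n* s) + c * E * s powr a * (1 + (\<theta>*q) * (\<Sum>k<n. (\<theta>*q)^k))"
          using s by (simp add: powr_mult q_def algebra_simps)
        also have "1 + (\<theta>*q) * (\<Sum>k<n. (\<theta>*q)^k) = (\<Sum>k<Suc n. (\<theta>*q)^k)"
          by (simp only: sum.lessThan_Suc_shift sum_distrib_left power_Suc power_0)
        finally show "\<alpha> s \<le> \<theta>^Suc n * \<alpha> (2^Suc n* s) + c * E * s powr a * (\<Sum>k<Suc n. (\<theta>*q)^k)" .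
      qed
    qed
    have bnd: "\<alpha> r \<le> \<theta>^n * m + c * E * r powr a / (1 - \<theta>*q)" for n
    proof -
      have "\<alpha> r \<le> \<theta>^n * \<alpha> (2^n*r) + c * E * r powr a * (\<Sum>k<n. (\<theta>*q)^k)" using iter r by blast
      also have "\<dots> \<le> \<theta>^n * m + c * E * r powr a * (1 / (1 - \<theta>*q))"
        using thq cpos E(2) r ale
        by (intro add_mono mult_left_mono geo_bound) auto
      finally show ?thesis by simp
    qed
    have lim: "(\<lambda>n. \<theta>^n * m + c * E * r powr a / (1 - \<theta>*q)) \<longlonglongrightarrow> 0 * m + c * E * r powr a / (1 - \<theta>*q)"
      using thq th1 by (intro tendsto_intros LIMSEQ_power_zero) auto
    have "\<alpha> r \<le> c * E * r powr a / (1 - \<theta>*q)"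
      using LIMSEQ_le_const[OF lim, of "\<alpha> r"] bnd by auto
    then have "\<alpha> r \<le> ?K * r powr a * E" unfolding K by (simp add: field_simps)
    then have "ennreal (\<alpha> r) \<le> ennreal (?K * r powr a * E)" by (rule ennreal_leI)
    also have "\<dots> = ennreal (?K * r powr a) * ennreal E"
      using E(2) cpos thq r unfolding K by (intro ennreal_mult) auto
    finally show ?thesis unfolding Afin E .
  qed
qed
lemma ennreal_term_le_suminf: "(f i :: ennreal) \<le> suminf f"
  using ennreal_suminf_lessD[of f "f i" i] by (meson not_le order_less_irrefl)

lemma measurable_inv_dist_pow[measurable]:
  assumes [measurable]: "f \<in> borel_measurable M" "g \<in> borel_measurable M"
  shows "(\<lambda>x. inv_dist_pow c (f x) (g x)) \<in> borel_measurable M"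
  unfolding inv_dist_pow_def by measurable

lemma dyadic:
  fixes x x0 :: "real^2"
  assumes "x \<noteq> x0" "0 < \<rho>" "0 < c"
  shows "inv_dist_pow c x x0 \<le> ennreal (\<rho> powr -c) +
    (\<Sum>n. ennreal (\<rho> powr -c * 2 powr ((real n + 1) * c)) * indicator (ball x0 (\<rho> / 2^n)) x)"
proof -
  define d where "d = norm (x - x0)"
  have d: "0 < d" using assms unfolding d_def by auto
  have idp: "inv_dist_pow c x x0 = ennreal (d powr -c)" using assms unfolding inv_dist_pow_def d_def by simp
  show ?thesis
  proof (cases "\<rho> \<le> d")
    case True
    then have "d powr -c \<le> \<rho> powr -c" using assms by (intro powr_mono2') auto
    then have "ennreal (d powr -c) \<le> ennreal (\<rho> powr -c)" by (rule ennreal_leI)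
    then show ?thesis unfolding idp by (rule add_increasing2[OF zero_le])
  next
    case False
    obtain N where N: "\<rho> / d < 2 ^ N" using real_arch_pow[of 2 "\<rho>/d"] by auto
    have "\<rho> < d * 2^N" using N d by (simp add: field_simps)
    moreover have "d * 2^N \<le> d * 2 ^ Suc N" using d by simp
    ultimately have "\<rho> \<le> d * 2 ^ Suc N" by linarith
    then have PN: "\<rho> / 2 ^ Suc N \<le> d" by (simp add: divide_le_eq)
    define n where "n = (LEAST n. \<rho> / 2 ^ Suc n \<le> d)"
    have n1: "\<rho> / 2 ^ Suc n \<le> d" unfolding n_def by (rule LeastI[of _ N], rule PN)
    have n2: "d < \<rho> / 2 ^ n"
    proof (cases n)
      case 0 then show ?thesis using False by simp
    next
      case (Suc m)
      then have "\<not> \<rho> / 2 ^ Suc m \<le> d" unfolding n_def using not_less_Least[of m] Suc n_def by (metis lessI)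
      then show ?thesis using Suc by simp
    qed
    have "d powr -c \<le> (\<rho> / 2 ^ Suc n) powr -c" using n1 assms by (intro powr_mono2') auto
    also have "(\<rho> / 2 ^ Suc n) powr -c = \<rho> powr -c * 2 powr ((real n + 1) * c)"
    proof -
      have t: "(2::real) ^ Suc n = 2 powr (real n + 1)" using powr_realpow[of 2 "Suc n"] by (simp add: add.commute)
      have "(\<rho> / 2 ^ Suc n) powr -c = \<rho> powr -c / (2 ^ Suc n) powr -c"
        by (rule powr_divide)
      also have "\<dots> = \<rho> powr -c * (2 powr (real n + 1)) powr c"
        unfolding t by (simp add: powr_minus divide_inverse)
      also have "\<dots> = \<rho> powr -c * 2 powr ((real n + 1) * c)" by (simp add: powr_powr)
      finally show ?thesis .
    qed
    finally have "ennreal (d powr -c) \<le> ennreal (\<rho> powr -c * 2 powr ((real n + 1) * c)) * indicator (ball x0 (\<rho> / 2^n)) x"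
      using n2 by (simp add: d_def dist_norm norm_minus_commute ennreal_leI)
    also have "\<dots> \<le> (\<Sum>n. ennreal (\<rho> powr -c * 2 powr ((real n + 1) * c)) * indicator (ball x0 (\<rho> / 2^n)) x)"
      by (rule ennreal_term_le_suminf)
    finally show ?thesis unfolding idp by (rule add_increasing[OF zero_le])
  qed
qed
definition "eps_a a = (4 - 2 powr a) / (2 * 2 powr a)"
definition "K0 a = (1+1/eps_a a) * 3 powr (2+a) / (4*pi) / (1 - (1+eps_a a)/4 * 2 powr a)"
definition "KK a c = K0 a * 2 powr c / (1 - 2 powr (c - a))"

lemma eps_props:
  assumes "0 < a" "a < 2"
  shows "0 < eps_a a" "(1+eps_a a)/4 * 2 powr a < 1" "0 < K0 a"
proof -
  define q where "q = (2::real) powr a"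
  have q1: "1 < q" unfolding q_def using assms by simp
  have "q < 2 powr 2" unfolding q_def using assms by (intro powr_less_mono) auto
  then have q4: "q < 4" by simp
  show e: "0 < eps_a a" unfolding eps_a_def q_def[symmetric] using q1 q4 by simp
  have "(1+eps_a a)/4 * 2 powr a = (q + 4) / 8" unfolding eps_a_def q_def[symmetric] using q1
    by (simp add: field_simps)
  then show t: "(1+eps_a a)/4 * 2 powr a < 1" using q4 by simp
  have "0 < 1 + 1 / eps_a a" using e by (simp add: add_pos_pos)
  then show "0 < K0 a" unfolding K0_def using t by (intro divide_pos_pos mult_pos_pos) auto
qed

lemma KK_pos: "0 < a \<Longrightarrow> a < 2 \<Longrightarrow> c < a \<Longrightarrow> 0 < KK a c"
proof -
  assume "0 < a" "a < 2" "c < a"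
  moreover have "2 powr (c - a) < 2 powr 0" using \<open>c < a\<close> by (intro powr_less_mono) auto
  ultimately show ?thesis unfolding KK_def using eps_props(3)[of a] by (intro divide_pos_pos mult_pos_pos) auto
qed

lemma ennreal_suminf_mono: "(\<And>n. f n \<le> g n) \<Longrightarrow> suminf f \<le> (suminf g :: ennreal)"
  by (intro suminf_le) auto

lemma term_identity:
  assumes "0 < \<rho>"
  shows "\<rho> powr -c * 2 powr ((real n + 1) * c) * (K * (\<rho> / 2^n) powr a)
       = (K * \<rho> powr (a - c) * 2 powr c) * (2 powr (c - a))^n"
proof -
  have e1: "(\<rho> / 2^n) powr a = \<rho> powr a / 2 powr (real n * a)"
    using assms by (simp add: powr_divide powr_realpow[symmetric] powr_powr)
  have e2: "(2 powr (c - a))^n = 2 powr (real n * c) / 2 powr (real n * a)"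
    by (simp add: powr_power powr_diff[symmetric] algebra_simps)
  have e3: "2 powr ((real n + 1) * c) = 2 powr c * 2 powr (real n * c)"
    by (simp add: powr_add[symmetric] algebra_simps)
  have e4: "\<rho> powr (a - c) = \<rho> powr -c * \<rho> powr a"
    by (simp add: powr_add[symmetric])
  show ?thesis unfolding e1 e2 e3 e4 by (simp add: field_simps)
qed
lemma core:
  fixes g :: "real^2 \<Rightarrow> real"
  assumes g[measurable]: "g \<in> borel_measurable lborel" and gnn: "\<And>x. 0 \<le> g x"
    and a: "0 < a" "a < 2" and c: "0 < c" "c < a" and \<rho>: "0 < \<rho>"
  shows "(\<integral>\<^sup>+x. ennreal (g x) * inv_dist_pow c x x0 \<partial>lborel) \<le>
     ennreal (\<rho> powr -c) * (\<integral>\<^sup>+x. ennreal (g x) \<partial>lborel) + ennreal (KK a c * \<rho> powr (a - c)) *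
      (\<integral>\<^sup>+x. \<integral>\<^sup>+y. Phi (g x) (g y) * ennreal (norm (x - y) powr -(2+a)) \<partial>lborel \<partial>lborel)"
    (is "?L \<le> ennreal (\<rho> powr -c) * ?M + ennreal (KK a c * \<rho> powr (a - c)) * ?E")
proof (cases "?M = \<top>")
  case True
  have "ennreal (\<rho> powr -c) \<noteq> 0" using \<rho> by (simp only: ennreal_eq_0_iff not_le) simp
  then have "ennreal (\<rho> powr -c) * ?M = \<top>" unfolding True by (rule ennreal_top_mult_left)
  then show ?thesis by simp
next
  case False
  then have Mf: "?M < \<infinity>" by (simp add: less_top)
  define t where "t n = ennreal (\<rho> powr -c * 2 powr ((real n + 1) * c))" for n
  define A where "A n = (\<integral>\<^sup>+x. ennreal (g x) * indicator (ball x0 (\<rho> / 2^n)) x \<partial>lborel)" for n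
  have [measurable]: "\<And>s. ball x0 s \<in> sets borel" by simp
  have "?L \<le> (\<integral>\<^sup>+x. ennreal (\<rho> powr -c) * ennreal (g x) + (\<Sum>n. t n * (ennreal (g x) * indicator (ball x0 (\<rho> / 2^n)) x)) \<partial>lborel)"
  proof (intro nn_integral_mono_AE)
    show "AE x in lborel. ennreal (g x) * inv_dist_pow c x x0 \<le> ennreal (\<rho> powr -c) * ennreal (g x) + (\<Sum>n. t n * (ennreal (g x) * indicator (ball x0 (\<rho> / 2^n)) x))"
      using AE_lborel_singleton[of x0]
    proof eventually_elim
      case (elim x)
      have "ennreal (g x) * inv_dist_pow c x x0 \<le> ennreal (g x) * (ennreal (\<rho> powr -c) +
         (\<Sum>n. ennreal (\<rho> powr -c * 2 powr ((real n + 1) * c)) * indicator (ball x0 (\<rho> / 2^n)) x))"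
        by (intro mult_left_mono dyadic elim \<rho> c) auto
      also have "\<dots> = ennreal (\<rho> powr -c) * ennreal (g x) + (\<Sum>n. t n * (ennreal (g x) * indicator (ball x0 (\<rho> / 2^n)) x))"
        unfolding distrib_left ennreal_suminf_cmult[symmetric] t_def by (simp only: mult.commute mult.left_commute mult.assoc)
      finally show ?case .
    qed
  qed
  also have "\<dots> = ennreal (\<rho> powr -c) * ?M + (\<Sum>n. t n * A n)"
    unfolding A_def
    by (simp add: nn_integral_add nn_integral_suminf nn_integral_cmult)
  also have "(\<Sum>n. t n * A n) \<le> (\<Sum>n. ennreal ((K0 a * \<rho> powr (a - c) * 2 powr c) * (2 powr (c - a))^n) * ?E)"
  proof (intro ennreal_suminf_mono)
    fix n
    have "A n \<le> ennreal (K0 a * (\<rho> / 2^n) powr a) * ?E"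
      unfolding A_def K0_def using eps_props[OF a] Mf \<rho> a
      by (intro morrey[OF g gnn]) auto
    then have "t n * A n \<le> t n * (ennreal (K0 a * (\<rho> / 2^n) powr a) * ?E)"
      by (rule mult_left_mono) simp
    also have "\<dots> = ennreal (\<rho> powr -c * 2 powr ((real n + 1) * c) * (K0 a * (\<rho> / 2^n) powr a)) * ?E"
      unfolding t_def using eps_props[OF a] by (simp add: ennreal_mult mult_ac)
    also have "\<dots> = ennreal ((K0 a * \<rho> powr (a - c) * 2 powr c) * (2 powr (c - a))^n) * ?E"
      unfolding term_identity[OF \<rho>] ..
    finally show "t n * A n \<le> ennreal ((K0 a * \<rho> powr (a - c) * 2 powr c) * (2 powr (c - a))^n) * ?E" .
  qed
  also have "(\<Sum>n. ennreal ((K0 a * \<rho> powr (a - c) * 2 powr c) * (2 powr (c - a))^n) * ?E)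
     = ennreal (KK a c * \<rho> powr (a - c)) * ?E"
  proof -
    have lt: "2 powr (c - a) < 2 powr 0" using c by (intro powr_less_mono) auto
    have "(\<lambda>n. (K0 a * \<rho> powr (a - c) * 2 powr c) * (2 powr (c - a))^n) sums ((K0 a * \<rho> powr (a - c) * 2 powr c) * (1 / (1 - 2 powr (c - a))))"
      using lt by (intro sums_mult geometric_sums) simp
    then have "(\<Sum>n. ennreal ((K0 a * \<rho> powr (a - c) * 2 powr c) * (2 powr (c - a))^n)) = ennreal ((K0 a * \<rho> powr (a - c) * 2 powr c) * (1 / (1 - 2 powr (c - a))))"
      using eps_props[OF a] by (intro suminf_ennreal_eq) auto
    also have "(K0 a * \<rho> powr (a - c) * 2 powr c) * (1 / (1 - 2 powr (c - a))) = KK a c * \<rho> powr (a - c)"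
      unfolding KK_def by simp
    finally show ?thesis by (simp add: ennreal_suminf_multc)
  qed
  finally show ?thesis by (simp add: add_left_mono)
qed
lemma measurable_upd_raw[measurable (raw)]:
  assumes f: "f \<in> measurable N (PiM I (\<lambda>_. M))" and g: "g \<in> measurable N M" and k: "k \<notin> I"
  shows "(\<lambda>w. (f w)(k := g w)) \<in> measurable N (PiM (insert k I) (\<lambda>_. M))"
proof (rule measurable_PiM_single')
  fix i assume "i \<in> insert k I"
  show "(\<lambda>w. ((f w)(k := g w)) i) \<in> measurable N M"
  proof (cases "i = k")
    case True then show ?thesis using g by simp
  next
    case False then have "i \<in> I" using \<open>i \<in> insert k I\<close> by simp
    then show ?thesis using False f by simp
  qed
next
  show "(\<lambda>w. (f w)(k := g w)) \<in> space N \<rightarrow> (\<Pi>\<^sub>E i\<in>insert k I. space M)"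
    using measurable_space[OF f] measurable_space[OF g] by (auto simp: space_PiM PiE_iff extensional_def)
qed

lemma Qbound:
  fixes G :: "(nat \<Rightarrow> real^2) \<Rightarrow> real"
  assumes G[measurable]: "G \<in> borel_measurable (leb_conf N)" and Gnn: "\<And>x. 0 \<le> G x"
    and a: "0 < a" "a < 2" and c: "0 < c" "c < a" and \<rho>: "0 < \<rho>"
    and kl: "k < N" "l < N" "k \<noteq> l"
  shows "(\<integral>\<^sup>+x. ennreal (G x) * inv_dist_pow c (x k) (x l) \<partial>leb_conf N) \<le>
     ennreal (\<rho> powr -c) * (\<integral>\<^sup>+x. ennreal (G x) \<partial>leb_conf N) + ennreal (KK a c * \<rho> powr (a - c)) *
     (\<integral>\<^sup>+ z. (\<integral>\<^sup>+ x. \<integral>\<^sup>+ y.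
         Phi (G (z(k := x))) (G (z(k := y))) * ennreal (norm (x - y) powr (-(2 + a)))
       \<partial>lborel \<partial>lborel) \<partial>(PiM ({..<N} - {k}) (\<lambda>_. lborel)))"
proof -
  interpret product_sigma_finite "\<lambda>_. lborel" by standard
  define I where "I = {..<N} - {k}"
  have kI: "k \<notin> I" "finite I" unfolding I_def by auto
  have L: "leb_conf N = PiM (insert k I) (\<lambda>_. lborel)" unfolding leb_conf_def I_def using kl
    by (simp add: insert_absorb)
  have lI: "l \<in> I" unfolding I_def using kl by auto
  have G'[measurable]: "G \<in> borel_measurable (PiM (insert k I) (\<lambda>_. lborel))" using G unfolding L .
  have "(\<integral>\<^sup>+x. ennreal (G x) * inv_dist_pow c (x k) (x l) \<partial>leb_conf N)
      = (\<integral>\<^sup>+z. \<integral>\<^sup>+x. ennreal (G (z(k := x))) * inv_dist_pow c x (z l) \<partial>lborel \<partial>PiM I (\<lambda>_. lborel))"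
    unfolding L using kI kl lI
    by (subst product_nn_integral_insert) (auto intro!: nn_integral_cong)
  also have "\<dots> \<le> (\<integral>\<^sup>+z. ennreal (\<rho> powr -c) * (\<integral>\<^sup>+x. ennreal (G (z(k := x))) \<partial>lborel) +
       ennreal (KK a c * \<rho> powr (a - c)) * (\<integral>\<^sup>+ x. \<integral>\<^sup>+ y.
         Phi (G (z(k := x))) (G (z(k := y))) * ennreal (norm (x - y) powr (-(2 + a)))
       \<partial>lborel \<partial>lborel) \<partial>PiM I (\<lambda>_. lborel))"
  proof (intro nn_integral_mono)
    fix z :: "nat \<Rightarrow> real^2" assume z: "z \<in> space (PiM I (\<lambda>_. lborel))"
    have [measurable]: "(\<lambda>x. G (z(k := x))) \<in> borel_measurable lborel"
      using measurable_component_update[OF z kI(1)] by measurable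
    show "(\<integral>\<^sup>+x. ennreal (G (z(k := x))) * inv_dist_pow c x (z l) \<partial>lborel) \<le> ennreal (\<rho> powr -c) * (\<integral>\<^sup>+x. ennreal (G (z(k := x))) \<partial>lborel) +
       ennreal (KK a c * \<rho> powr (a - c)) * (\<integral>\<^sup>+ x. \<integral>\<^sup>+ y.
         Phi (G (z(k := x))) (G (z(k := y))) * ennreal (norm (x - y) powr (-(2 + a)))
       \<partial>lborel \<partial>lborel)"
      by (rule core) (use a c \<rho> Gnn in auto)
  qed
  also have "\<dots> = ennreal (\<rho> powr -c) * (\<integral>\<^sup>+z. \<integral>\<^sup>+x. ennreal (G (z(k := x))) \<partial>lborel \<partial>PiM I (\<lambda>_. lborel)) +
       ennreal (KK a c * \<rho> powr (a - c)) * (\<integral>\<^sup>+z. \<integral>\<^sup>+ x. \<integral>\<^sup>+ y.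
         Phi (G (z(k := x))) (G (z(k := y))) * ennreal (norm (x - y) powr (-(2 + a)))
       \<partial>lborel \<partial>lborel \<partial>PiM I (\<lambda>_. lborel))"
    using kI by (subst nn_integral_add) (auto simp: nn_integral_cmult)
  also have "(\<integral>\<^sup>+z. \<integral>\<^sup>+x. ennreal (G (z(k := x))) \<partial>lborel \<partial>PiM I (\<lambda>_. lborel)) = (\<integral>\<^sup>+x. ennreal (G x) \<partial>leb_conf N)"
    unfolding L using kI by (subst product_nn_integral_insert) auto
  finally show ?thesis unfolding I_def .
qed
lemma sym_pair:
  assumes F: "sym_prob N F" and ij: "i < N" "j < N" "i \<noteq> j" and k: "k < N"
  shows "\<exists>l<N. l \<noteq> k \<and> (\<integral>\<^sup>+x. inv_dist_pow c (x i) (x j) \<partial>F) = (\<integral>\<^sup>+x. inv_dist_pow c (x k) (x l) \<partial>F)"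
proof -
  define \<sigma> where "\<sigma> = Transposition.transpose i k"
  have perm: "\<sigma> permutes {..<N}" unfolding \<sigma>_def using ij k by (intro permutes_swap_id) auto
  have inv: "distr F F (\<lambda>x. x \<circ> \<sigma>) = F" and sF: "sets F = sets (leb_conf N)"
    using F perm unfolding sym_prob_def by auto
  have hm: "(\<lambda>x. x \<circ> \<sigma>) \<in> measurable (leb_conf N) (leb_conf N)"
    unfolding leb_conf_def
  proof (rule measurable_PiM_single')
    fix i' :: nat assume "i' \<in> {..<N}"
    then have s: "\<sigma> i' \<in> {..<N}" by (simp only: permutes_in_image[OF perm])
    have e: "(\<lambda>x. (x \<circ> \<sigma>) i') = (\<lambda>x. x (\<sigma> i'))" by (rule ext) (simp only: o_apply)
    show "(\<lambda>x. (x \<circ> \<sigma>) i') \<in> measurable (PiM {..<N} (\<lambda>_. lborel)) (lborel :: (real^2) measure)"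
      unfolding e by (rule measurable_component_singleton[OF s])
  next
    show "(\<lambda>x. x \<circ> \<sigma>) \<in> space (PiM {..<N} (\<lambda>_. lborel :: (real^2) measure)) \<rightarrow> (\<Pi>\<^sub>E i\<in>{..<N}. space (lborel :: (real^2) measure))"
    proof
      fix x assume x: "x \<in> space (PiM {..<N} (\<lambda>_. lborel :: (real^2) measure))"
      show "x \<circ> \<sigma> \<in> (\<Pi>\<^sub>E i\<in>{..<N}. space lborel)"
      proof (rule PiE_I)
        fix i' show "(x \<circ> \<sigma>) i' \<in> space lborel" by simp
      next
        fix i' assume "i' \<notin> {..<N}"
        then have "\<sigma> i' = i'" using perm by (simp add: permutes_not_in)
        moreover have "x i' = undefined" using x \<open>i' \<notin> {..<N}\<close> by (auto simp: space_PiM PiE_def extensional_def)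
        ultimately show "(x \<circ> \<sigma>) i' = undefined" by simp
      qed
    qed
  qed
  have mFF: "measurable F F = measurable (leb_conf N) (leb_conf N)" by (rule measurable_cong_sets[OF sF sF])
  have hmF: "(\<lambda>x. x \<circ> \<sigma>) \<in> measurable F F" unfolding mFF by (rule hm)
  have mFB: "measurable F borel = measurable (leb_conf N) borel" by (rule measurable_cong_sets[OF sF refl])
  have iN: "i \<in> {..<N}" "j \<in> {..<N}" using ij by auto
  have "(\<lambda>x. inv_dist_pow c (x i) (x j)) \<in> borel_measurable (leb_conf N)"
    unfolding leb_conf_def using iN by measurable
  then have fm: "(\<lambda>x. inv_dist_pow c (x i) (x j)) \<in> borel_measurable F" unfolding mFB .
  have "(\<integral>\<^sup>+x. inv_dist_pow c (x i) (x j) \<partial>F) = (\<integral>\<^sup>+x. inv_dist_pow c (x i) (x j) \<partial>distr F F (\<lambda>x. x \<circ> \<sigma>))"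
    using inv by simp
  also have "\<dots> = (\<integral>\<^sup>+x. inv_dist_pow c (x (\<sigma> i)) (x (\<sigma> j)) \<partial>F)"
  proof -
    have fm': "(\<lambda>x. inv_dist_pow c (x i) (x j)) \<in> borel_measurable (distr F F (\<lambda>x. x \<circ> \<sigma>))"
      unfolding measurable_cong_sets[OF sets_distr refl] by (rule fm)
    show ?thesis by (subst nn_integral_distr[OF hmF fm']) simp
  qed
  finally have eq: "(\<integral>\<^sup>+x. inv_dist_pow c (x i) (x j) \<partial>F) = (\<integral>\<^sup>+x. inv_dist_pow c (x (\<sigma> i)) (x (\<sigma> j)) \<partial>F)" .
  have "\<sigma> i = k" unfolding \<sigma>_def by simp
  moreover have "\<sigma> j \<noteq> k" unfolding \<sigma>_def using ij by (auto simp: Transposition.transpose_def)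
  moreover have "\<sigma> j < N" using perm ij permutes_in_image by fastforce
  ultimately show ?thesis using eq by auto
qed

lemma INF_lin:
  fixes Q b :: ennreal
  assumes "\<And>G. G \<in> S \<Longrightarrow> Q \<le> b + ennreal cr * f G" "0 < cr"
  shows "Q \<le> b + ennreal cr * (INF G\<in>S. f G)"
proof (rule ennreal_le_epsilon)
  fix \<epsilon> :: real assume lt: "b + ennreal cr * (INF G\<in>S. f G) < top" and e: "0 < \<epsilon>"
  have "(INF G\<in>S. f G) \<noteq> \<top>"
  proof
    assume "(INF G\<in>S. f G) = \<top>"
    then have "ennreal cr * (INF G\<in>S. f G) = \<top>" using assms(2) by simp
    then show False using lt by simp
  qed
  then obtain G where G: "G \<in> S" "f G < (INF G\<in>S. f G) + ennreal (\<epsilon> / cr)"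
    using INF_approx_ennreal[of "\<epsilon> / cr" "INF G\<in>S. f G" f S] e assms(2) by auto
  have "Q \<le> b + ennreal cr * f G" using assms(1) G by auto
  also have "\<dots> \<le> b + ennreal cr * ((INF G\<in>S. f G) + ennreal (\<epsilon> / cr))"
    using G by (intro add_left_mono mult_left_mono) auto
  also have "\<dots> = b + ennreal cr * (INF G\<in>S. f G) + ennreal \<epsilon>"
    using assms(2) e by (simp add: distrib_left ennreal_mult[symmetric] add.assoc)
  finally show "Q \<le> b + ennreal cr * (INF G\<in>S. f G) + ennreal \<epsilon>" .
qed
lemma pair_G:
  fixes G :: "(nat \<Rightarrow> real^2) \<Rightarrow> real"
  assumes F: "sym_prob N F" and Fd: "F = density (leb_conf N) (\<lambda>x. ennreal (G x))"
    and G[measurable]: "G \<in> borel_measurable (leb_conf N)" and Gnn: "\<And>x. 0 \<le> G x"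
    and a: "0 < a" "a < 2" and c: "0 < c" "c < a" and \<rho>: "0 < \<rho>"
    and ij: "i < N" "j < N" "i \<noteq> j"
  shows "(\<integral>\<^sup>+x. inv_dist_pow c (x i) (x j) \<partial>F) \<le> ennreal (\<rho> powr -c) + ennreal (2 * KK a c * \<rho> powr (a - c)) * fisher_a a N G"
proof -
  define Q where "Q = (\<integral>\<^sup>+x. inv_dist_pow c (x i) (x j) \<partial>F)"
  define T where "T k = (\<integral>\<^sup>+ z. (\<integral>\<^sup>+ x. \<integral>\<^sup>+ y.
         Phi (G (z(k := x))) (G (z(k := y))) * ennreal (norm (x - y) powr (-(2 + a)))
       \<partial>lborel \<partial>lborel) \<partial>(PiM ({..<N} - {k}) (\<lambda>_. lborel)))" for k
  define b where "b = ennreal (\<rho> powr -c)"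
  define c' where "c' = ennreal (KK a c * \<rho> powr (a - c))"
  have Npos: "0 < N" using ij by simp
  have G2[measurable]: "G \<in> borel_measurable (PiM {..<N} (\<lambda>_. lborel))" using G unfolding leb_conf_def .
  have "prob_space F" using F unfolding sym_prob_def by simp
  then have "emeasure F (space F) = 1" by (rule prob_space.emeasure_space_1)
  then have "(\<integral>\<^sup>+x. 1 \<partial>F) = 1" by simp
  moreover have "(\<integral>\<^sup>+x. 1 \<partial>F) = (\<integral>\<^sup>+x. ennreal (G x) * 1 \<partial>leb_conf N)"
    unfolding Fd by (rule nn_integral_density) auto
  ultimately have one: "(\<integral>\<^sup>+x. ennreal (G x) \<partial>leb_conf N) = 1" by simp
  have each: "Q \<le> b + c' * T k" if k: "k < N" for k
  proof -
    obtain l where l: "l < N" "l \<noteq> k" "Q = (\<integral>\<^sup>+x. inv_dist_pow c (x k) (x l) \<partial>F)"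
      using sym_pair[OF F ij k, of c] unfolding Q_def by blast
    have kN: "k \<in> {..<N}" "l \<in> {..<N}" using k l by auto
    have "Q = (\<integral>\<^sup>+x. ennreal (G x) * inv_dist_pow c (x k) (x l) \<partial>leb_conf N)"
      unfolding l(3) Fd using kN by (subst nn_integral_density) (auto simp: leb_conf_def)
    also have "\<dots> \<le> b * 1 + c' * T k"
      unfolding b_def c'_def T_def one[symmetric]
      by (rule Qbound[OF G Gnn a c \<rho> k l(1)]) (use l in auto)
    finally show ?thesis by simp
  qed
  have "of_nat N * Q = (\<Sum>k<N. Q)" by simp
  also have "\<dots> \<le> (\<Sum>k<N. b + c' * T k)" by (intro sum_mono each) auto
  also have "\<dots> = of_nat N * b + c' * (\<Sum>k<N. T k)" by (simp add: sum.distrib sum_distrib_left)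
  also have "(\<Sum>k<N. T k) = ennreal (2 * real N) * fisher_a a N G"
  proof -
    have "ennreal (2 * real N) * ennreal (1 / (2 * real N)) = 1"
      using Npos by (simp add: ennreal_mult[symmetric])
    then show ?thesis unfolding fisher_a_def T_def by (simp add: mult.assoc[symmetric])
  qed
  also have "of_nat N * b + c' * (ennreal (2 * real N) * fisher_a a N G)
      = of_nat N * (b + ennreal (2 * KK a c * \<rho> powr (a - c)) * fisher_a a N G)"
  proof -
    have "c' * ennreal (2 * real N) = of_nat N * ennreal (2 * KK a c * \<rho> powr (a - c))"
      unfolding c'_def using KK_pos[OF a c(2)] \<rho>
      by (simp add: ennreal_mult[symmetric] ennreal_of_nat_eq_real_of_nat mult_ac)
    then show ?thesis by (simp add: distrib_left mult.assoc[symmetric])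
  qed
  finally have "of_nat N * Q \<le> of_nat N * (b + ennreal (2 * KK a c * \<rho> powr (a - c)) * fisher_a a N G)" .
  then have "Q \<le> b + ennreal (2 * KK a c * \<rho> powr (a - c)) * fisher_a a N G"
    using Npos by (subst (asm) ennreal_mult_le_mult_iff) (auto simp: ennreal_of_nat_eq_real_of_nat)
  then show ?thesis unfolding Q_def b_def .
qed
lemma final_real:
  fixes Q :: ennreal and I :: ennreal
  assumes K: "0 < K" and a: "0 < a" and ce: "0 < c" "c / a \<le> e"
    and star: "\<And>\<rho>. 0 < \<rho> \<Longrightarrow> Q \<le> ennreal (\<rho> powr -c) + ennreal (K * \<rho> powr (a - c)) * I"
  shows "Q \<le> ennreal (1 + K) * (1 + enn_powr I e)"
proof (cases I)
  case top
  have "ennreal (1 + K) \<noteq> 0" using K by (simp only: ennreal_eq_0_iff not_le)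
  then have "ennreal (1 + K) * (1 + enn_powr I e) = \<top>" unfolding top enn_powr_def by simp
  then show ?thesis by simp
next
  case (real t)
  note t = real
  have ep: "enn_powr I e = ennreal (t powr e)" unfolding t enn_powr_def using t by simp
  show ?thesis
  proof (cases "t \<le> 1")
    case True
    have "Q \<le> ennreal (1 powr -c) + ennreal (K * 1 powr (a - c)) * I" by (rule star) simp
    also have "\<dots> = ennreal (1 + K * t)"
    proof -
      have "ennreal (1 + K*t) = ennreal 1 + ennreal (K*t)" using K t by (intro ennreal_plus) auto
      then show ?thesis using K t by (simp add: ennreal_mult[symmetric])
    qed
    also have "\<dots> \<le> ennreal (1 + K)" using True K t by (intro ennreal_leI) (simp add: mult_left_le)
    also have "\<dots> = ennreal (1 + K) * 1" by simp
    also have "\<dots> \<le> ennreal (1 + K) * (1 + enn_powr I e)" by (intro mult_left_mono) auto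
    finally show ?thesis .
  next
    case False
    then have t1: "1 < t" by simp
    define \<rho> where "\<rho> = t powr (-1/a)"
    have \<rho>: "0 < \<rho>" unfolding \<rho>_def using t1 by simp
    have r1: "\<rho> powr -c = t powr (c/a)" unfolding \<rho>_def using t1 by (simp add: powr_powr)
    have "\<rho> powr (a - c) * t = t powr ((-1/a) * (a - c)) * t powr 1" unfolding \<rho>_def using t1 by (simp add: powr_powr)
    also have "\<dots> = t powr ((-1/a) * (a - c) + 1)" by (rule powr_add[symmetric])
    also have "(-1/a) * (a - c) + 1 = c/a" using a by (simp add: field_simps)
    finally have r2: "\<rho> powr (a - c) * t = t powr (c/a)" .
    have "Q \<le> ennreal (\<rho> powr -c) + ennreal (K * \<rho> powr (a - c)) * I" by (rule star[OF \<rho>])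
    also have "\<dots> = ennreal ((1 + K) * t powr (c/a))"
      unfolding t using K t \<rho> r1 r2[symmetric]
      by (simp add: ennreal_mult[symmetric] ennreal_plus[symmetric] algebra_simps del: ennreal_plus)
    also have "\<dots> \<le> ennreal ((1 + K) * t powr e)"
      using t1 ce K by (intro ennreal_leI mult_left_mono powr_mono) auto
    also have "\<dots> = ennreal (1 + K) * ennreal (t powr e)" using K by (simp add: ennreal_mult)
    also have "\<dots> \<le> ennreal (1 + K) * (1 + enn_powr I e)" unfolding ep by (intro mult_left_mono) auto
    finally show ?thesis .
  qed
qed
theorem corollary3p16:
  fixes a \<gamma> p :: real
  assumes "0 < a" "a < 2" "0 < \<gamma>" "\<gamma> < a"
    and "2 / (2 - \<gamma>) < p" "p < 2 / (2 - a)"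
  shows "\<exists>C>0. \<forall>N\<ge>2. \<forall>F. sym_prob N F \<longrightarrow>
    (SUP ij \<in> {(i, j). i < N \<and> j < N \<and> i \<noteq> j}.
        \<integral>\<^sup>+ x. inv_dist_pow \<gamma> (x (fst ij)) (x (snd ij)) \<partial>F)
    \<le> ennreal C * (1 + enn_powr (fisher_meas a N F) (1 - (2 / a) * (1 / p - (2 - a) / 2)))"
proof -
  note a = assms(1,2) and c = assms(3,4)
  define e where "e = 1 - (2 / a) * (1 / p - (2 - a) / 2)"
  define K where "K = 2 * KK a \<gamma>"
  have Kpos: "0 < K" unfolding K_def using KK_pos[OF a c(2)] by simp
  have g2: "0 < 2 - \<gamma>" using assms by simp
  have ppos: "0 < p" using assms(5) g2 by (smt (verit) divide_pos_pos)
  have "2 < p * (2 - \<gamma>)" using assms(5) g2 by (simp add: divide_less_eq mult.commute)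
  then have "2 / p < 2 - \<gamma>" using ppos by (simp add: divide_less_eq mult.commute)
  moreover have "e = (2 - 2 / p) / a" unfolding e_def using a ppos by (simp add: field_simps)
  ultimately have ge: "\<gamma> / a \<le> e" using a by (simp add: divide_right_mono)
  show ?thesis
  proof (intro exI[of _ "1 + K"] conjI allI impI)
    show "0 < 1 + K" using Kpos by simp
    fix N :: nat and F assume N: "2 \<le> N" and F: "sym_prob N F"
    show "(SUP ij \<in> {(i, j). i < N \<and> j < N \<and> i \<noteq> j}.
        \<integral>\<^sup>+ x. inv_dist_pow \<gamma> (x (fst ij)) (x (snd ij)) \<partial>F)
      \<le> ennreal (1 + K) * (1 + enn_powr (fisher_meas a N F) (1 - (2 / a) * (1 / p - (2 - a) / 2)))"
      unfolding e_def[symmetric]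
    proof (rule SUP_least)
      fix ij assume "ij \<in> {(i, j). i < N \<and> j < N \<and> i \<noteq> j}"
      then obtain i j where ij: "ij = (i, j)" "i < N" "j < N" "i \<noteq> j" by auto
      show "(\<integral>\<^sup>+ x. inv_dist_pow \<gamma> (x (fst ij)) (x (snd ij)) \<partial>F) \<le> ennreal (1 + K) * (1 + enn_powr (fisher_meas a N F) e)"
      proof (rule final_real[OF Kpos a(1) c(1) ge])
        fix \<rho> :: real assume \<rho>: "0 < \<rho>"
        have "0 < K * \<rho> powr (a - \<gamma>)" using Kpos \<rho> by simp
        then show "(\<integral>\<^sup>+ x. inv_dist_pow \<gamma> (x (fst ij)) (x (snd ij)) \<partial>F) \<le> ennreal (\<rho> powr -\<gamma>) + ennreal (K * \<rho> powr (a - \<gamma>)) * fisher_meas a N F"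
          unfolding fisher_meas_def
        proof (rule INF_lin[rotated])
          fix G assume "G \<in> {G. G \<in> borel_measurable (leb_conf N) \<and> (\<forall>x. 0 \<le> G x) \<and>
             F = density (leb_conf N) (\<lambda>x. ennreal (G x))}"
          then have G: "G \<in> borel_measurable (leb_conf N)" "\<And>x. 0 \<le> G x" "F = density (leb_conf N) (\<lambda>x. ennreal (G x))"
            by auto
          show "(\<integral>\<^sup>+ x. inv_dist_pow \<gamma> (x (fst ij)) (x (snd ij)) \<partial>F) \<le> ennreal (\<rho> powr -\<gamma>) + ennreal (K * \<rho> powr (a - \<gamma>)) * fisher_a a N G"
            unfolding ij(1) fst_conv snd_conv K_def
            using pair_G[OF F G(3) G(1) G(2) a c \<rho> ij(2-4)] by (simp add: mult.assoc)
        qed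
      qed
    qed
  qed
qed

end
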